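(* Let $(\mathcal P,d,\rho)$ be a rotational operad. The natural morphism $\theta^{-1}\colon\theta(\mathcal P)\to\mathcal P$, $a\mapsto\rho(a)$, factors as $$\theta(\mathcal P)\xrightarrow{\ \rho\ }\mathrm{Im}(\rho)\hookrightarrow\ker(\rho)\to\mathcal P.$$
   Context: A rotational operad is a dg operad $\mathcal P$ with a degree $-1$ square-zero operator $\rho$ on each $\mathcal P(n)$, $d\rho+\rho d=0$, satisfying $\rho(a\circ_i\rho(b))=\rho(a)\circ_i\rho(b)$. $\theta(\mathcal P)$ is the (non-unital) operad in mixed complexes with $\theta(\mathcal P)(n)=\Sigma^{-1}\mathcal P(n)$, differential $d$, operator $\rho$, and twisted compositions $a\,\tilde\circ_i\, b:=a\circ_i\rho(b)$. $\mathrm{Im}(\rho)$ and $\ker(\rho)$ are suboperads of $\mathcal P$. *)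

theory Defs
  imports Main
begin

definition ksign :: "int \<Rightarrow> 'a::ab_group_add \<Rightarrow> 'a" where
  "ksign e x = (if even e then x else - x)"

text \<open>A (unital, non-symmetric) dg operad, homological grading.
  P n k is the degree-k part of the arity-n component; d has degree -1;
  c i a b is the partial composition a \<circ>_i b (1 \<le> i \<le> arity of a); u is the unit.\<close>
definition dg_operad ::
  "(nat \<Rightarrow> int \<Rightarrow> 'a::ab_group_add set) \<Rightarrow> ('a \<Rightarrow> 'a) \<Rightarrow> (nat \<Rightarrow> 'a \<Rightarrow> 'a \<Rightarrow> 'a) \<Rightarrow> 'a \<Rightarrow> bool" where
  "dg_operad P d c u \<longleftrightarrow>
     (\<forall>n k. 0 \<in> P n k \<and> (\<forall>x\<in>P n k. \<forall>y\<in>P n k. x + y \<in> P n k) \<and> (\<forall>x\<in>P n k. - x \<in> P n k)) \<and>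
     (\<forall>n k. \<forall>x\<in>P n k. d x \<in> P n (k - 1)) \<and>
     (\<forall>n k. \<forall>x\<in>P n k. \<forall>y\<in>P n k. d (x + y) = d x + d y) \<and>
     (\<forall>n k. \<forall>x\<in>P n k. d (d x) = 0) \<and>
     (\<forall>m n p q i. \<forall>a\<in>P m p. \<forall>b\<in>P n q. 1 \<le> i \<and> i \<le> m \<longrightarrow>
         c i a b \<in> P (m + n - 1) (p + q)) \<and>
     (\<forall>m n p q i. \<forall>a\<in>P m p. \<forall>a'\<in>P m p. \<forall>b\<in>P n q. 1 \<le> i \<and> i \<le> m \<longrightarrow>
         c i (a + a') b = c i a b + c i a' b) \<and>
     (\<forall>m n p q i. \<forall>a\<in>P m p. \<forall>b\<in>P n q. \<forall>b'\<in>P n q. 1 \<le> i \<and> i \<le> m \<longrightarrow>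
         c i a (b + b') = c i a b + c i a b') \<and>
     (\<forall>m n p q i. \<forall>a\<in>P m p. \<forall>b\<in>P n q. 1 \<le> i \<and> i \<le> m \<longrightarrow>
         d (c i a b) = c i (d a) b + ksign p (c i a (d b))) \<and>
     (\<forall>l m n p q r i j. \<forall>a\<in>P l p. \<forall>b\<in>P m q. \<forall>e\<in>P n r.
         1 \<le> i \<and> i \<le> l \<and> i \<le> j \<and> j < i + m \<longrightarrow>
         c j (c i a b) e = c i a (c (j - i + 1) b e)) \<and>
     (\<forall>l m n p q r i j. \<forall>a\<in>P l p. \<forall>b\<in>P m q. \<forall>e\<in>P n r.
         1 \<le> i \<and> i < j \<and> j \<le> l \<longrightarrow>
         c (j + m - 1) (c i a b) e = ksign (q * r) (c i (c j a e) b)) \<and>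
     u \<in> P 1 0 \<and> d u = 0 \<and>
     (\<forall>n k. \<forall>a\<in>P n k. c 1 u a = a \<and> (\<forall>i. 1 \<le> i \<and> i \<le> n \<longrightarrow> c i a u = a))"

definition rotational_operad ::
  "(nat \<Rightarrow> int \<Rightarrow> 'a::ab_group_add set) \<Rightarrow> ('a \<Rightarrow> 'a) \<Rightarrow> (nat \<Rightarrow> 'a \<Rightarrow> 'a \<Rightarrow> 'a) \<Rightarrow> 'a
     \<Rightarrow> ('a \<Rightarrow> 'a) \<Rightarrow> bool" where
  "rotational_operad P d c u \<rho> \<longleftrightarrow>
     dg_operad P d c u \<and>
     (\<forall>n k. \<forall>x\<in>P n k. \<rho> x \<in> P n (k - 1)) \<and>
     (\<forall>n k. \<forall>x\<in>P n k. \<forall>y\<in>P n k. \<rho> (x + y) = \<rho> x + \<rho> y) \<and>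
     (\<forall>n k. \<forall>x\<in>P n k. \<rho> (\<rho> x) = 0) \<and>
     (\<forall>n k. \<forall>x\<in>P n k. d (\<rho> x) + \<rho> (d x) = 0) \<and>
     (\<forall>m n p q i. \<forall>a\<in>P m p. \<forall>b\<in>P n q. 1 \<le> i \<and> i \<le> m \<longrightarrow>
         \<rho> (c i a (\<rho> b)) = c i (\<rho> a) (\<rho> b))"

text \<open>theta(P): desuspended components (degree k of theta(P)(n) is degree k+1 of P(n)),
  differential of the desuspension (-d, Koszul sign), operator rho, twisted compositions.\<close>
definition thetaP :: "(nat \<Rightarrow> int \<Rightarrow> 'a set) \<Rightarrow> nat \<Rightarrow> int \<Rightarrow> 'a set" where
  "thetaP P n k = P n (k + 1)"

definition theta_d :: "('a::ab_group_add \<Rightarrow> 'a) \<Rightarrow> 'a \<Rightarrow> 'a" where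
  "theta_d d x = - d x"

definition theta_comp :: "(nat \<Rightarrow> 'a \<Rightarrow> 'a \<Rightarrow> 'a) \<Rightarrow> ('a \<Rightarrow> 'a) \<Rightarrow> nat \<Rightarrow> 'a \<Rightarrow> 'a \<Rightarrow> 'a" where
  "theta_comp c \<rho> i a b = c i a (\<rho> b)"

definition ImRho :: "(nat \<Rightarrow> int \<Rightarrow> 'a set) \<Rightarrow> ('a \<Rightarrow> 'a) \<Rightarrow> nat \<Rightarrow> int \<Rightarrow> 'a set" where
  "ImRho P \<rho> n k = \<rho> ` P n (k + 1)"

definition KerRho :: "(nat \<Rightarrow> int \<Rightarrow> 'a::zero set) \<Rightarrow> ('a \<Rightarrow> 'a) \<Rightarrow> nat \<Rightarrow> int \<Rightarrow> 'a set" where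
  "KerRho P \<rho> n k = {x \<in> P n k. \<rho> x = 0}"

definition rot_hom ::
  "(nat \<Rightarrow> int \<Rightarrow> 'a::ab_group_add set) \<Rightarrow> ('a \<Rightarrow> 'a) \<Rightarrow> ('a \<Rightarrow> 'a) \<Rightarrow> (nat \<Rightarrow> 'a \<Rightarrow> 'a \<Rightarrow> 'a) \<Rightarrow>
   (nat \<Rightarrow> int \<Rightarrow> 'b::ab_group_add set) \<Rightarrow> ('b \<Rightarrow> 'b) \<Rightarrow> ('b \<Rightarrow> 'b) \<Rightarrow> (nat \<Rightarrow> 'b \<Rightarrow> 'b \<Rightarrow> 'b) \<Rightarrow>
   ('a \<Rightarrow> 'b) \<Rightarrow> bool" where
  "rot_hom Q dQ rQ cQ R dR rR cR f \<longleftrightarrow>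
     (\<forall>n k. \<forall>x\<in>Q n k. f x \<in> R n k) \<and>
     (\<forall>n k. \<forall>x\<in>Q n k. \<forall>y\<in>Q n k. f (x + y) = f x + f y) \<and>
     (\<forall>n k. \<forall>x\<in>Q n k. f (dQ x) = dR (f x)) \<and>
     (\<forall>n k. \<forall>x\<in>Q n k. f (rQ x) = rR (f x)) \<and>
     (\<forall>m n p q i. \<forall>a\<in>Q m p. \<forall>b\<in>Q n q. 1 \<le> i \<and> i \<le> m \<longrightarrow>
         f (cQ i a b) = cR i (f a) (f b))"

end

theory Submission
  imports Defs
begin

theorem mainTheorem6:
  fixes P :: "nat \<Rightarrow> int \<Rightarrow> 'a::ab_group_add set"
    and d \<rho> :: "'a \<Rightarrow> 'a" and c :: "nat \<Rightarrow> 'a \<Rightarrow> 'a \<Rightarrow> 'a" and u :: 'a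
  assumes "rotational_operad P d c u \<rho>"
  shows "rot_hom (thetaP P) (theta_d d) \<rho> (theta_comp c \<rho>) P d \<rho> c \<rho>
       \<and> rot_hom (thetaP P) (theta_d d) \<rho> (theta_comp c \<rho>) (ImRho P \<rho>) d \<rho> c \<rho>
       \<and> (\<forall>n k. ImRho P \<rho> n k \<subseteq> KerRho P \<rho> n k \<and> KerRho P \<rho> n k \<subseteq> P n k)
       \<and> rot_hom (ImRho P \<rho>) d \<rho> c (KerRho P \<rho>) d \<rho> c id
       \<and> rot_hom (KerRho P \<rho>) d \<rho> c P d \<rho> c id
       \<and> (\<forall>n k. \<forall>a\<in>thetaP P n k. id (id (\<rho> a)) = \<rho> a)"
proof -
  have op: "dg_operad P d c u" using assms by (simp add: rotational_operad_def)
  have zero: "\<And>n k. 0 \<in> P n k" using op unfolding dg_operad_def by (elim conjE) simp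
  have neg: "\<And>n k x. x \<in> P n k \<Longrightarrow> - x \<in> P n k" using op unfolding dg_operad_def by (elim conjE) simp
  have dP: "\<And>n k x. x \<in> P n k \<Longrightarrow> d x \<in> P n (k - 1)" using op unfolding dg_operad_def by (elim conjE) simp
  have rP: "\<And>n k x. x \<in> P n k \<Longrightarrow> \<rho> x \<in> P n (k - 1)"
    and radd: "\<And>n k x y. x \<in> P n k \<Longrightarrow> y \<in> P n k \<Longrightarrow> \<rho> (x + y) = \<rho> x + \<rho> y"
    and rr: "\<And>n k x. x \<in> P n k \<Longrightarrow> \<rho> (\<rho> x) = 0"
    and dr: "\<And>n k x. x \<in> P n k \<Longrightarrow> d (\<rho> x) + \<rho> (d x) = 0"
    and rc: "\<And>m n p q i a b. a \<in> P m p \<Longrightarrow> b \<in> P n q \<Longrightarrow> 1 \<le> i \<Longrightarrow> i \<le> m \<Longrightarrow>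
         \<rho> (c i a (\<rho> b)) = c i (\<rho> a) (\<rho> b)"
    using assms unfolding rotational_operad_def by (elim conjE, simp)+
  have rneg: "\<rho> (- x) = - \<rho> x" if "x \<in> P n k" for x n k
  proof -
    have "\<rho> (x + - x) = \<rho> x + \<rho> (- x)" using radd[OF that neg[OF that]] .
    moreover have "\<rho> (0::'a) = 0"
      using radd[where n=n and k=k and x=0 and y=0, OF zero zero] by simp
    ultimately show ?thesis by (simp add: eq_neg_iff_add_eq_0 add.commute)
  qed
  have rd: "\<rho> (theta_d d x) = d (\<rho> x)" if "x \<in> P n k" for x n k
  proof -
    have "\<rho> (theta_d d x) = - \<rho> (d x)" unfolding theta_d_def using rneg[OF dP[OF that]] .
    also have "\<dots> = d (\<rho> x)"
    proof -
      have "d (\<rho> x) = - \<rho> (d x)" using dr[OF that] by (simp add: eq_neg_iff_add_eq_0)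
      then show ?thesis by simp
    qed
    finally show ?thesis .
  qed
  have h1: "rot_hom (thetaP P) (theta_d d) \<rho> (theta_comp c \<rho>) P d \<rho> c \<rho>"
    unfolding rot_hom_def thetaP_def theta_comp_def
    using rP radd rd rc by fastforce
  have h2: "rot_hom (thetaP P) (theta_d d) \<rho> (theta_comp c \<rho>) (ImRho P \<rho>) d \<rho> c \<rho>"
    unfolding rot_hom_def thetaP_def theta_comp_def ImRho_def
    using radd rd rc by fastforce
  have h3: "\<forall>n k. ImRho P \<rho> n k \<subseteq> KerRho P \<rho> n k \<and> KerRho P \<rho> n k \<subseteq> P n k"
    unfolding ImRho_def KerRho_def using rP rr by fastforce
  have h4: "rot_hom (ImRho P \<rho>) d \<rho> c (KerRho P \<rho>) d \<rho> c id"
    unfolding rot_hom_def using h3 by auto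
  have h5: "rot_hom (KerRho P \<rho>) d \<rho> c P d \<rho> c id"
    unfolding rot_hom_def KerRho_def by auto
  show ?thesis using h1 h2 h3 h4 h5 by simp
qed

end
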